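(* Fix $\Theta\in\Omega$ with $\mu$, $(Y_i)_{i\ge0}$ as in the setup. Almost surely there exists $i_0\in\mathbb N$ such that for every $i\ge i_0$, $$Y_{i+1}-Y_i\le\frac{5\log Y_i}{\mu[0,Y_i]}.$$
   Context: Let $\Omega$ be the set of sequences $\Theta=(\theta_i)_{i\ge 0}$ of nonnegative reals with $\sum_{i\ge0}\theta_i^2=1$, $\theta_1\ge\theta_2\ge\cdots$, and either $\theta_0\ne0$ or $\sum_{i\ge1}\theta_i=\infty$. For $\Theta\in\Omega$, let $(X_i)_{i\ge1}$ be independent exponential random variables with respective rates $\theta_i$ (a rate-$0$ variable equals $+\infty$), and let $\mu:=\theta_0^2\,dx+\sum_{i\ge1}\theta_i\delta_{X_i}$, a random measure on $\mathbb R^+$ (a.s. $\mu[0,l]<\infty$ for all $l$). Conditionally on $\mu$, let $Y_1<Y_2<\cdots$ be the points of a Poisson point process on $\mathbb R^+$ with intensity $\mu[0,l]\,dl$ (the "cuts"), and set $Y_0:=0$. *)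

theory Defs
  imports "HOL-Probability.Probability"
begin

definition mu_mass :: "(nat \<Rightarrow> real) \<Rightarrow> (nat \<Rightarrow> real) \<Rightarrow> real \<Rightarrow> real" where
  "mu_mass \<theta> x l = \<theta> 0 ^ 2 * l + (\<Sum>i. \<theta> (Suc i) * indicator {..l} (x (Suc i)))"

definition cum_intensity :: "(nat \<Rightarrow> real) \<Rightarrow> (nat \<Rightarrow> real) \<Rightarrow> real \<Rightarrow> real" where
  "cum_intensity \<theta> x t = integral {0..t} (mu_mass \<theta> x)"

text \<open>k-th cut: generalised inverse of Lambda at the k-th point E_0+...+E_(k-1) of a
  rate-one Poisson process; cut 0 = 0.\<close>
definition cut :: "(nat \<Rightarrow> real) \<Rightarrow> (nat \<Rightarrow> real) \<Rightarrow> (nat \<Rightarrow> real) \<Rightarrow> nat \<Rightarrow> real" where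
  "cut \<theta> x e k = Inf {t. 0 \<le> t \<and> (\<Sum>j<k. e j) \<le> cum_intensity \<theta> x t}"

end

theory Submission
  imports Defs "HOL-Probability.Hoeffding"
begin


lemma det_main:
  fixes m :: "real \<Rightarrow> real" and e :: "nat \<Rightarrow> real" and \<Lambda> :: "real \<Rightarrow> real" and Y :: "nat \<Rightarrow> real"
  assumes mono: "mono m" and mnn: "\<And>l. l \<ge> 0 \<Longrightarrow> m l \<ge> 0"
    and l0: "l0 \<ge> 0" "m l0 > 0"
    and T: "T \<ge> 1" "\<And>t. t \<ge> T \<Longrightarrow> m t \<le> 9 * t ^ 3"
    and enn: "\<And>j. e j \<ge> 0"
    and N1: "\<And>n. n \<ge> N1 \<Longrightarrow> (\<Sum>j<n. e j) \<ge> real n / 10"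
    and N2: "\<And>i. i \<ge> N2 \<Longrightarrow> e i \<le> 6/5 * ln (real i)"
    and \<Lambda>_def: "\<And>t. \<Lambda> t = integral {0..t} m"
    and Y_def: "\<And>k. Y k = Inf {t. 0 \<le> t \<and> (\<Sum>j<k. e j) \<le> \<Lambda> t}"
  shows "\<exists>i0. \<forall>i\<ge>i0. Y (Suc i) - Y i \<le> 5 * ln (Y i) / m (Y i)"
proof -
  have intg: "m integrable_on {a..b}" for a b
    by (rule integrable_on_mono_on) (meson mono mono_on_subset subset_UNIV)
  have bnds: "(b - a) * m a \<le> integral {a..b} m \<and> integral {a..b} m \<le> (b - a) * m b" if "a \<le> b" for a b
  proof -
    have "integral {a..b} (\<lambda>_. m a) \<le> integral {a..b} m"
      by (rule integral_le) (use intg mono in \<open>auto simp: mono_def\<close>)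
    moreover have "integral {a..b} m \<le> integral {a..b} (\<lambda>_. m b)"
      by (rule integral_le) (use intg mono in \<open>auto simp: mono_def\<close>)
    ultimately show ?thesis using that by simp
  qed
  have comb: "\<Lambda> b = \<Lambda> a + integral {a..b} m" if "0 \<le> a" "a \<le> b" for a b
    using Henstock_Kurzweil_Integration.integral_combine[OF that(1) that(2) intg] by (simp add: \<Lambda>_def)
  have incr: "\<Lambda> b - \<Lambda> a \<ge> (b - a) * m a" "\<Lambda> b - \<Lambda> a \<le> (b - a) * m b" if "0 \<le> a" "a \<le> b" for a b
    using comb[OF that] bnds[OF that(2)] by auto
  have \<Lambda>0: "\<Lambda> 0 = 0" by (simp add: \<Lambda>_def)
  have \<Lambda>mono: "\<Lambda> a \<le> \<Lambda> b" if "0 \<le> a" "a \<le> b" for a b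
    using incr(1)[OF that] mnn[OF that(1)] that by (smt (verit) mult_nonneg_nonneg)
  have \<Lambda>upper: "\<Lambda> t \<le> t * m t" if "0 \<le> t" for t
    using incr(2)[of 0 t] that \<Lambda>0 by simp
  define S where "S k = (\<Sum>j<k. e j)" for k
  have Snn: "S k \<ge> 0" for k unfolding S_def by (simp add: enn sum_nonneg)
  define A where "A k = {t. 0 \<le> t \<and> S k \<le> \<Lambda> t}" for k
  have YA: "Y k = Inf (A k)" for k by (simp add: Y_def A_def S_def)
  have Ane: "A k \<noteq> {}" for k
  proof -
    define t where "t = l0 + S k / m l0"
    have "t \<ge> l0" using Snn l0 by (simp add: t_def)
    have "\<Lambda> t - \<Lambda> l0 \<ge> (t - l0) * m l0" by (rule incr(1)) (use l0 \<open>t \<ge> l0\<close> in auto)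
    moreover have "(t - l0) * m l0 = S k" using l0 by (simp add: t_def)
    moreover have "\<Lambda> l0 \<ge> 0" using \<Lambda>mono[of 0 l0] l0 \<Lambda>0 by simp
    ultimately have "S k \<le> \<Lambda> t" by linarith
    then show ?thesis using \<open>t \<ge> l0\<close> l0 unfolding A_def by (auto intro!: exI[of _ t])
  qed
  have Abdd: "bdd_below (A k)" for k unfolding A_def by (rule bdd_belowI[of _ 0]) auto
  have Ynn: "Y k \<ge> 0" for k unfolding YA by (rule cInf_greatest[OF Ane]) (auto simp: A_def)
  have YS: "S k \<le> \<Lambda> (Y k)" for k
  proof (rule field_le_epsilon)
    fix d :: real assume "d > 0"
    define K where "K = m (Y k + 1)"
    have K: "K \<ge> 0" using mnn Ynn[of k] by (simp add: K_def)
    define \<epsilon> where "\<epsilon> = min 1 (d / (K + 1))"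
    have \<epsilon>: "\<epsilon> > 0" "\<epsilon> \<le> 1" using \<open>d > 0\<close> K by (auto simp: \<epsilon>_def)
    have "\<epsilon> * K \<le> d"
    proof -
      have "\<epsilon> * K \<le> (d / (K+1)) * K" using K by (intro mult_right_mono) (auto simp: \<epsilon>_def)
      also have "\<dots> \<le> d" using K \<open>d>0\<close> by (simp add: field_simps)
      finally show ?thesis .
    qed
    obtain a where a: "a \<in> A k" "a < Y k + \<epsilon>"
      using cInf_less_iff[OF Ane[of k] Abdd[of k], where y="Y k + \<epsilon>"] \<epsilon> YA by auto
    have a0: "0 \<le> a" using a by (auto simp: A_def)
    have "S k \<le> \<Lambda> a" using a by (auto simp: A_def)
    also have "\<Lambda> a \<le> \<Lambda> (Y k + \<epsilon>)" using a a0 \<Lambda>mono by auto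
    also have "\<Lambda> (Y k + \<epsilon>) \<le> \<Lambda> (Y k) + \<epsilon> * m (Y k + \<epsilon>)"
      using incr(2)[of "Y k" "Y k + \<epsilon>"] Ynn \<epsilon> by auto
    also have "\<epsilon> * m (Y k + \<epsilon>) \<le> \<epsilon> * K"
      using \<epsilon> mono unfolding K_def by (intro mult_left_mono) (auto simp: mono_def)
    finally show "S k \<le> \<Lambda> (Y k) + d" using \<open>\<epsilon> * K \<le> d\<close> by linarith
  qed
  have step: "Y (Suc i) \<le> Y i + e i / m (Y i)" if "m (Y i) > 0" for i
  proof -
    define t where "t = Y i + e i / m (Y i)"
    have "t \<ge> Y i" using that enn by (simp add: t_def)
    have "\<Lambda> t - \<Lambda> (Y i) \<ge> (t - Y i) * m (Y i)" by (rule incr(1)) (use Ynn \<open>t \<ge> Y i\<close> in auto)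
    moreover have "(t - Y i) * m (Y i) = e i" using that by (simp add: t_def)
    ultimately have "S (Suc i) \<le> \<Lambda> t" using YS[of i] by (simp add: S_def)
    then have "t \<in> A (Suc i)" using \<open>t \<ge> Y i\<close> Ynn[of i] by (auto simp: A_def)
    then show ?thesis using cInf_lower[OF _ Abdd] YA t_def by metis
  qed
  define T' where "T' = max T l0"
  define N4 where "N4 = nat \<lceil>10 * \<Lambda> T'\<rceil> + 1"
  define N3 where "N3 = nat \<lceil>exp (25 * ln (90::real))\<rceil>"
  show ?thesis
  proof (intro exI allI impI)
    fix i assume i: "max (max N1 N2) (max N3 N4) \<le> i"
    have Si: "S i \<ge> real i / 10" using N1 i by (simp add: S_def)
    have "real i > 10 * \<Lambda> T'" using i unfolding N4_def by linarith
    then have "S i > \<Lambda> T'" using Si by linarith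
    have YT: "Y i \<ge> T'"
    proof (rule ccontr)
      assume "\<not> T' \<le> Y i"
      then have "\<Lambda> (Y i) \<le> \<Lambda> T'" using \<Lambda>mono Ynn by auto
      then show False using YS[of i] \<open>S i > \<Lambda> T'\<close> by linarith
    qed
    have mpos: "m (Y i) > 0" using l0 YT mono unfolding T'_def mono_def
      by (meson dual_order.trans max.cobounded2 less_le_trans)
    have Y1: "Y i \<ge> 1" using YT T unfolding T'_def by linarith
    have "real i / 10 \<le> \<Lambda> (Y i)" using Si YS[of i] by linarith
    also have "\<dots> \<le> Y i * m (Y i)" using \<Lambda>upper Ynn by auto
    also have "\<dots> \<le> Y i * (9 * Y i ^ 3)" using T(2)[of "Y i"] YT Ynn unfolding T'_def
      by (intro mult_left_mono) auto
    finally have Y4: "real i / 90 \<le> Y i ^ 4" by (simp add: power_numeral_reduce)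
    have ipos: "real i > 0" using \<open>real i > 10 * \<Lambda> T'\<close> \<Lambda>mono[of 0 T'] \<Lambda>0 l0 unfolding T'_def by linarith
    have "ln (real i / 90) \<le> ln (Y i ^ 4)" using Y4 ipos by (intro ln_mono) auto
    then have L1: "ln (real i) - ln 90 \<le> 4 * ln (Y i)" using ipos Y1 by (simp add: ln_div ln_realpow)
    have "real i \<ge> exp (25 * ln 90)" proof -
      have "N3 \<le> i" using i by simp
      then show ?thesis unfolding N3_def by linarith
    qed
    then have L2: "ln (real i) \<ge> 25 * ln 90" using ipos by (metis exp_le_cancel_iff exp_ln)
    have "e i \<le> 6/5 * ln (real i)" using N2 i by auto
    also have "\<dots> \<le> 5 * ln (Y i)" using L1 L2 by linarith
    finally have E: "e i \<le> 5 * ln (Y i)" .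
    have "Y (Suc i) - Y i \<le> e i / m (Y i)" using step[OF mpos] by linarith
    also have "\<dots> \<le> 5 * ln (Y i) / m (Y i)" using E mpos by (intro divide_right_mono) auto
    finally show "Y (Suc i) - Y i \<le> 5 * ln (Y i) / m (Y i)" .
  qed
qed



lemma (in prob_space) expo_AE_nonneg:
  assumes D: "distributed M lborel Z (exponential_density l)"
  shows "AE \<omega> in M. 0 \<le> Z \<omega>"
proof -
  have "AE x in distr M lborel Z. 0 \<le> x"
    unfolding distributed_distr_eq_density[OF D]
    by (subst AE_density) (auto simp: exponential_density_def)
  then show ?thesis
    using AE_distrD[OF distributed_measurable[OF D]] by simp
qed

lemma (in prob_space) expo_tail_AE:
  assumes D: "\<And>j. distributed M lborel (E j) (exponential_density 1)"
  shows "AE \<omega> in M. \<exists>N. \<forall>i\<ge>N. E i \<omega> \<le> 6/5 * ln (real i)"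
proof -
  have [measurable]: "E j \<in> borel_measurable M" for j
    using distributed_measurable[OF D[of j]] by simp
  define A where "A i = {\<omega> \<in> space M. 6/5 * ln (real i) < E i \<omega>}" for i
  have Am[measurable]: "A i \<in> sets M" for i unfolding A_def by measurable
  have pA: "measure M (A i) = exp (- (6/5 * ln (real i)))" for i
  proof -
    have "0 \<le> 6/5 * ln (real i)" by (cases i) auto
    from exponential_distributedD_gt[OF D[of i] this] show ?thesis
      by (simp add: A_def)
  qed
  have "summable (\<lambda>i. measure M (A i))"
  proof (rule summable_comparison_test')
    show "summable (\<lambda>i. real i powr (-6/5))" by (subst summable_real_powr_iff) simp
    fix i :: nat assume "i \<ge> 1"
    then show "norm (measure M (A i)) \<le> real i powr (-6/5)"
      by (simp add: pA powr_def exp_minus inverse_eq_divide)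
  qed
  from borel_cantelli_AE1[OF Am _ this] have
    "AE \<omega> in M. eventually (\<lambda>i. \<omega> \<in> space M - A i) sequentially" by (simp add: emeasure_eq_measure)
  then show ?thesis
    by eventually_elim (auto simp: A_def eventually_sequentially not_less)
qed



lemma (in prob_space) hoeff_AE:
  assumes D: "\<And>j. distributed M lborel (E j) (exponential_density 1)"
    and ind: "indep_vars (\<lambda>_. borel) (\<lambda>k. case k of Inl i \<Rightarrow> X i | Inr j \<Rightarrow> E j) (Inl ` S \<union> Inr ` UNIV)"
  shows "AE \<omega> in M. \<exists>N. \<forall>n\<ge>N. (\<Sum>j<n. E j \<omega>) \<ge> real n / 10"
proof -
  have [measurable]: "E j \<in> borel_measurable M" for j
    using distributed_measurable[OF D[of j]] by simp
  define F where "F = (\<lambda>k. case k of Inl i \<Rightarrow> X i | Inr j \<Rightarrow> E j)"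
  define G where "G k \<omega> = (if 1 < F k \<omega> then 1 else 0 :: real)" for k \<omega>
  have indF: "indep_vars (\<lambda>_. borel) F (Inr ` UNIV)"
    using indep_vars_subset[OF ind[folded F_def]] by auto
  have indG: "indep_vars (\<lambda>_. borel) G (Inr ` UNIV)"
    unfolding G_def using indep_vars_compose2[OF indF, of "\<lambda>_ v. if 1 < v then 1 else 0::real" "\<lambda>_. borel"]
    by simp
  have GE: "G (Inr j) \<omega> = (if 1 < E j \<omega> then 1 else 0)" for j \<omega> by (simp add: G_def F_def)
  have expG: "expectation (G (Inr j)) = exp (-1)" for j
  proof -
    have "expectation (G (Inr j)) = expectation (indicator {\<omega>\<in>space M. 1 < E j \<omega>})"
      by (rule Bochner_Integration.integral_cong) (auto simp: GE indicator_def)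
    also have "\<dots> = prob {\<omega>\<in>space M. 1 < E j \<omega>}" by (simp add: Int_absorb2)
    also have "\<dots> = exp (-1)" using exponential_distributedD_gt[OF D[of j], of 1] by simp
    finally show ?thesis .
  qed
  define A where "A n = {x\<in>space M. (\<Sum>i\<in>Inr ` {..<n}. G i x) \<le> (\<Sum>i\<in>Inr ` {..<n}. expectation (G i)) - real n / 5}" for n
  have Gm[measurable]: "G k \<in> borel_measurable M" if kI: "k \<in> Inr ` UNIV" for k
  proof -
    obtain j where k: "k = Inr j" using kI by auto
    have "G (Inr j) = (\<lambda>\<omega>. if 1 < E j \<omega> then 1 else 0)" by (rule ext) (simp add: GE)
    then show ?thesis unfolding k by simp
  qed
  have Am[measurable]: "A n \<in> sets M" for n
  proof -
    have "(\<lambda>x. \<Sum>i\<in>Inr ` {..<n}. G i x) \<in> borel_measurable M"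
      by (rule borel_measurable_sum) (use Gm in auto)
    then show ?thesis unfolding A_def by measurable
  qed
  have cardI: "card (Inr ` {..<n} :: ('b + nat) set) = n" for n
    by (subst card_image) auto
  have pA: "measure M (A n) \<le> exp (-2/25) ^ n" if "n \<ge> 1" for n
  proof -
    interpret H: Hoeffding_ineq M "Inr ` {..<n}" G "\<lambda>_. 0" "\<lambda>_. 1" "\<Sum>i\<in>Inr ` {..<n}. expectation (G i)"
    proof unfold_locales
      show "indep_vars (\<lambda>_. borel) G (Inr ` {..<n})"
        by (rule indep_vars_subset[OF indG]) auto
    qed (auto simp: G_def)
    have "measure M (A n) \<le> exp (- 2 * (real n / 5)\<^sup>2 / real n)"
      using H.Hoeffding_ineq_le[of "real n / 5"] that cardI[of n] unfolding A_def by simp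
    also have "\<dots> = exp (-2/25) ^ n"
      using that cardI[of n] by (simp add: exp_of_nat_mult[symmetric] power2_eq_square field_simps)
    finally show ?thesis .
  qed
  have "summable (\<lambda>n. measure M (A n))"
  proof (rule summable_comparison_test')
    show "summable (\<lambda>n. exp (-2/25::real) ^ n)" by (rule summable_geometric) simp
    fix n :: nat assume "n \<ge> 1" then show "norm (measure M (A n)) \<le> exp (-2/25) ^ n" using pA by simp
  qed
  from borel_cantelli_AE1[OF Am _ this] have
    "AE \<omega> in M. eventually (\<lambda>n. \<omega> \<in> space M - A n) sequentially" by (simp add: emeasure_eq_measure)
  moreover have "AE \<omega> in M. \<forall>j. 0 \<le> E j \<omega>"
    by (subst AE_all_countable) (intro allI expo_AE_nonneg[OF D])
  ultimately show ?thesis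
  proof eventually_elim
    case (elim \<omega>)
    then obtain N where N: "\<And>n. n \<ge> N \<Longrightarrow> \<omega> \<in> space M \<and> \<omega> \<notin> A n" by (auto simp: eventually_sequentially)
    have e3: "exp (-1::real) \<ge> 1/3" using exp_le by (simp add: exp_minus field_simps)
    show ?case
    proof (intro exI allI impI)
      fix n assume "N \<le> n"
      then have "\<not> (\<Sum>i\<in>Inr ` {..<n}. G i \<omega>) \<le> (\<Sum>i\<in>Inr ` {..<n}. expectation (G i)) - real n / 5"
        using N unfolding A_def by auto
      moreover have "(\<Sum>i\<in>Inr ` {..<n}. expectation (G i)) = real n * exp (-1)"
        by (subst sum.reindex) (auto simp: expG)
      moreover have "(\<Sum>i\<in>Inr ` {..<n}. G i \<omega>) = (\<Sum>j<n. G (Inr j) \<omega>)"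
        by (subst sum.reindex) auto
      moreover have "(\<Sum>j<n. G (Inr j) \<omega>) \<le> (\<Sum>j<n. E j \<omega>)"
        by (rule sum_mono) (use elim in \<open>auto simp: GE\<close>)
      moreover have "real n * exp (-1) - real n / 5 \<ge> real n / 10"
      proof -
        have "real n * (1/3) \<le> real n * exp (-1)" using e3 by (intro mult_left_mono) auto
        then show ?thesis by simp
      qed
      ultimately show "(\<Sum>j<n. E j \<omega>) \<ge> real n / 10" by linarith
    qed
  qed
qed



lemma (in prob_space) Z_AE:
  fixes \<theta> :: "nat \<Rightarrow> real"
  assumes \<theta>nn: "\<And>i. \<theta> i \<ge> 0" and sq: "(\<lambda>i. \<theta> i ^ 2) sums 1"
    and DX: "\<And>i. i \<ge> 1 \<Longrightarrow> \<theta> i > 0 \<Longrightarrow> distributed M lborel (X i) (exponential_density (\<theta> i))"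
  shows "AE \<omega> in M. (\<forall>n::nat. summable (\<lambda>i. \<theta> (Suc i) * indicator {..real n} (X (Suc i) \<omega>))) \<and>
     (\<exists>N. \<forall>n\<ge>N. (\<Sum>i. \<theta> (Suc i) * indicator {..real n} (X (Suc i) \<omega>)) \<le> real n ^ 3)"
proof -
  define f where "f n i \<omega> = \<theta> (Suc i) * indicator {..real n} (X (Suc i) \<omega>)" for n i \<omega>
  have fnn: "f n i \<omega> \<ge> 0" for n i \<omega> using \<theta>nn by (simp add: f_def)
  have fm[measurable]: "f n i \<in> borel_measurable M" for n i
  proof (cases "\<theta> (Suc i) > 0")
    case True
    have [measurable]: "X (Suc i) \<in> borel_measurable M"
      using distributed_measurable[OF DX[OF _ True]] by simp
    show ?thesis unfolding f_def by measurable
  next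
    case False
    then have "f n i = (\<lambda>_. 0)" using \<theta>nn[of "Suc i"] by (auto simp: f_def fun_eq_iff)
    then show ?thesis by simp
  qed
  have intf: "(\<integral>\<^sup>+ \<omega>. ennreal (f n i \<omega>) \<partial>M) \<le> ennreal (real n * \<theta> (Suc i) ^ 2)" for n i
  proof (cases "\<theta> (Suc i) > 0")
    case True
    note D = DX[OF _ True]
    have [measurable]: "X (Suc i) \<in> borel_measurable M"
      using distributed_measurable[OF D] by simp
    define B where "B = {\<omega>\<in>space M. X (Suc i) \<omega> \<le> real n}"
    have Bm[measurable]: "B \<in> sets M" unfolding B_def by measurable
    have "(\<integral>\<^sup>+ \<omega>. ennreal (f n i \<omega>) \<partial>M) = (\<integral>\<^sup>+ \<omega>. ennreal (\<theta> (Suc i)) * indicator B \<omega> \<partial>M)"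
      by (rule nn_integral_cong) (auto simp: f_def B_def indicator_def)
    also have "\<dots> = ennreal (\<theta> (Suc i)) * emeasure M B" by (rule nn_integral_cmult_indicator[OF Bm])
    also have "emeasure M B = ennreal (1 - exp (- real n * \<theta> (Suc i)))"
      using exponential_distributedD_le[OF D, of "real n"] True
      by (simp add: B_def emeasure_eq_measure)
    also have "ennreal (\<theta> (Suc i)) * \<dots> = ennreal (\<theta> (Suc i) * (1 - exp (- real n * \<theta> (Suc i))))"
      using True by (simp add: ennreal_mult)
    also have "\<dots> \<le> ennreal (real n * \<theta> (Suc i) ^ 2)"
    proof (rule ennreal_leI)
      have "1 - exp (- real n * \<theta> (Suc i)) \<le> real n * \<theta> (Suc i)"
        using exp_ge_add_one_self[of "- real n * \<theta> (Suc i)"] by simp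
      then show "\<theta> (Suc i) * (1 - exp (- real n * \<theta> (Suc i))) \<le> real n * \<theta> (Suc i) ^ 2"
        using True by (simp add: power2_eq_square mult_left_mono mult.commute mult.left_commute)
    qed
    finally show ?thesis .
  next
    case False
    then have "f n i = (\<lambda>_. 0)" using \<theta>nn[of "Suc i"] by (auto simp: f_def fun_eq_iff)
    then show ?thesis by simp
  qed
  have sq1: "summable (\<lambda>i. \<theta> (Suc i) ^ 2)" using summable_Suc_iff[of "\<lambda>i. \<theta> i ^ 2"] sums_summable[OF sq] by simp
  have sq2: "(\<Sum>i. \<theta> (Suc i) ^ 2) \<le> 1"
  proof -
    have "(\<Sum>i. \<theta> (Suc i) ^ 2) = (\<Sum>i. \<theta> i ^ 2) - \<theta> 0 ^ 2"
      using suminf_split_head[OF sums_summable[OF sq]] by simp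
    then show ?thesis using sums_unique[OF sq] by simp
  qed
  define u where "u n \<omega> = (\<Sum>i. ennreal (f n i \<omega>))" for n \<omega>
  have um[measurable]: "u n \<in> borel_measurable M" for n unfolding u_def by measurable
  have intu: "(\<integral>\<^sup>+ \<omega>. u n \<omega> \<partial>M) \<le> ennreal (real n)" for n
  proof -
    have "(\<integral>\<^sup>+ \<omega>. u n \<omega> \<partial>M) = (\<Sum>i. \<integral>\<^sup>+ \<omega>. ennreal (f n i \<omega>) \<partial>M)"
      unfolding u_def by (rule nn_integral_suminf) simp
    also have "\<dots> \<le> (\<Sum>i. ennreal (real n * \<theta> (Suc i) ^ 2))"
      by (intro suminf_le intf) auto
    also have "\<dots> = ennreal (\<Sum>i. real n * \<theta> (Suc i) ^ 2)"
      by (rule suminf_ennreal2) (auto intro: summable_mult sq1)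
    also have "\<dots> \<le> ennreal (real n)"
    proof (rule ennreal_leI)
      have "(\<Sum>i. real n * \<theta> (Suc i) ^ 2) = real n * (\<Sum>i. \<theta> (Suc i) ^ 2)"
        by (rule suminf_mult[OF sq1])
      also have "\<dots> \<le> real n * 1" using sq2 by (intro mult_left_mono) auto
      finally show "(\<Sum>i. real n * \<theta> (Suc i) ^ 2) \<le> real n" by simp
    qed
    finally show ?thesis .
  qed
  have P1: "AE \<omega> in M. \<forall>n. summable (\<lambda>i. f n i \<omega>)"
  proof (subst AE_all_countable, intro allI)
    fix n
    have "AE \<omega> in M. u n \<omega> \<noteq> \<infinity>"
      by (rule nn_integral_PInf_AE[OF um]) (use intu[of n] in \<open>auto simp: top_unique\<close>)
    then show "AE \<omega> in M. summable (\<lambda>i. f n i \<omega>)"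
      by eventually_elim (rule summable_suminf_not_top[OF fnn], simp add: u_def)
  qed
  define B where "B n = {x\<in>space M. 1 \<le> ennreal (1 / real n ^ 3) * u n x}" for n
  have Bm[measurable]: "B n \<in> sets M" for n unfolding B_def by measurable
  have pB: "measure M (B n) \<le> inverse (real n ^ 2)" if "n \<ge> 1" for n
  proof -
    have "emeasure M (B n) \<le> ennreal (1 / real n ^ 3) * (\<integral>\<^sup>+ x. u n x * indicator (space M) x \<partial>M)"
      unfolding B_def using nn_integral_Markov_inequality[of "u n" "space M" M "ennreal (1 / real n ^ 3)"]
      by simp
    also have "(\<integral>\<^sup>+ x. u n x * indicator (space M) x \<partial>M) = (\<integral>\<^sup>+ x. u n x \<partial>M)"
      by (rule nn_integral_cong) simp
    also have "ennreal (1 / real n ^ 3) * \<dots> \<le> ennreal (1 / real n ^ 3) * ennreal (real n)"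
      by (intro mult_left_mono intu) auto
    also have "\<dots> = ennreal (inverse (real n ^ 2))"
      using that by (simp add: ennreal_mult[symmetric] power_numeral_reduce field_simps)
    finally show ?thesis by (simp add: emeasure_eq_measure)
  qed
  have "summable (\<lambda>n. measure M (B n))"
  proof (rule summable_comparison_test')
    show "summable (\<lambda>n. inverse (real n ^ 2))" by (rule inverse_power_summable) simp
    fix n :: nat assume "n \<ge> 1" then show "norm (measure M (B n)) \<le> inverse (real n ^ 2)" using pB by simp
  qed
  from borel_cantelli_AE1[OF Bm _ this] have
    "AE \<omega> in M. eventually (\<lambda>n. \<omega> \<in> space M - B n) sequentially" by (simp add: emeasure_eq_measure)
  with P1 show ?thesis
  proof eventually_elim
    case (elim \<omega>)
    then obtain N where N: "\<And>n. n \<ge> N \<Longrightarrow> \<omega> \<in> space M \<and> \<omega> \<notin> B n" by (auto simp: eventually_sequentially)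
    have "(\<Sum>i. f n i \<omega>) \<le> real n ^ 3" if n: "n \<ge> max N 1" for n
    proof -
      have "\<not> 1 \<le> ennreal (1 / real n ^ 3) * u n \<omega>" using N[of n] n by (auto simp: B_def)
      moreover have "u n \<omega> = ennreal (\<Sum>i. f n i \<omega>)"
        unfolding u_def by (rule suminf_ennreal2) (use fnn elim in auto)
      moreover have Z0: "0 \<le> (\<Sum>i. f n i \<omega>)" using fnn elim by (auto intro: suminf_nonneg)
      moreover have "ennreal (1 / real n ^ 3) * ennreal (\<Sum>i. f n i \<omega>) = ennreal (1 / real n ^ 3 * (\<Sum>i. f n i \<omega>))"
        by (rule ennreal_mult[symmetric]) (auto simp: Z0)
      ultimately have "\<not> 1 \<le> ennreal (1 / real n ^ 3 * (\<Sum>i. f n i \<omega>))"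
        by simp
      then have "1 / real n ^ 3 * (\<Sum>i. f n i \<omega>) < 1"
        by (metis ennreal_1 ennreal_leI not_le)
      then show ?thesis using n by (simp add: field_simps)
    qed
    then have "\<forall>n\<ge>max N 1. (\<Sum>i. f n i \<omega>) \<le> real n ^ 3" by blast
    then show ?case using elim unfolding f_def by blast
  qed
qed



lemma mu_props:
  fixes \<theta> :: "nat \<Rightarrow> real" and x :: "nat \<Rightarrow> real"
  assumes \<theta>nn: "\<And>i. \<theta> i \<ge> 0" and t0: "\<theta> 0 ^ 2 \<le> 1"
    and Q1: "\<And>n::nat. summable (\<lambda>i. \<theta> (Suc i) * indicator {..real n} (x (Suc i)))"
    and Q2: "\<And>n. n \<ge> N \<Longrightarrow> (\<Sum>i. \<theta> (Suc i) * indicator {..real n} (x (Suc i))) \<le> real n ^ 3"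
    and pos: "\<theta> 0 \<noteq> 0 \<or> (\<exists>j. \<theta> (Suc j) > 0)"
  shows "mono (mu_mass \<theta> x)" "\<And>l. l \<ge> 0 \<Longrightarrow> mu_mass \<theta> x l \<ge> 0"
    "\<exists>l0\<ge>0. mu_mass \<theta> x l0 > 0" "\<exists>T\<ge>1. \<forall>t\<ge>T. mu_mass \<theta> x t \<le> 9 * t ^ 3"
proof -
  define g where "g l i = \<theta> (Suc i) * indicator {..l} (x (Suc i))" for l i
  define Z where "Z l = (\<Sum>i. g l i)" for l
  have mm: "mu_mass \<theta> x l = \<theta> 0 ^ 2 * l + Z l" for l by (simp add: mu_mass_def Z_def g_def)
  have gnn: "0 \<le> g l i" for l i using \<theta>nn by (simp add: g_def)
  have gmono: "g l i \<le> g l' i" if "l \<le> l'" for l l' i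
    using \<theta>nn[of "Suc i"] that by (auto simp: g_def indicator_def)
  have summ: "summable (g l)" for l
  proof (rule summable_comparison_test)
    show "summable (g (real (nat \<lceil>l\<rceil>)))" using Q1[of "nat \<lceil>l\<rceil>"] by (simp add: g_def[abs_def])
    show "\<exists>N. \<forall>n\<ge>N. norm (g l n) \<le> g (real (nat \<lceil>l\<rceil>)) n"
    proof (intro exI allI impI)
      fix n :: nat
      have "l \<le> real (nat \<lceil>l\<rceil>)" by linarith
      then show "norm (g l n) \<le> g (real (nat \<lceil>l\<rceil>)) n" using gnn[of l n] gmono by simp
    qed
  qed
  have Zmono: "Z l \<le> Z l'" if "l \<le> l'" for l l'
    unfolding Z_def by (rule suminf_le[OF _ summ summ]) (use gmono that in auto)
  have Znn: "Z l \<ge> 0" for l unfolding Z_def by (rule suminf_nonneg[OF summ gnn])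
  show "mono (mu_mass \<theta> x)"
  proof (rule monoI)
    fix a b :: real assume "a \<le> b"
    then have "\<theta> 0 ^ 2 * a \<le> \<theta> 0 ^ 2 * b" by (intro mult_left_mono) auto
    then show "mu_mass \<theta> x a \<le> mu_mass \<theta> x b" using Zmono[OF \<open>a \<le> b\<close>] by (simp add: mm)
  qed
  show "\<And>l. l \<ge> 0 \<Longrightarrow> mu_mass \<theta> x l \<ge> 0" using Znn by (simp add: mm)
  show "\<exists>l0\<ge>0. mu_mass \<theta> x l0 > 0"
  proof (cases "\<theta> 0 \<noteq> 0")
    case True
    then have "\<theta> 0 ^ 2 > 0" by simp
    then have "mu_mass \<theta> x 1 > 0" using add_pos_nonneg[OF _ Znn[of 1]] by (simp add: mm)
    then show ?thesis by (intro exI[of _ 1]) simp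
  next
    case False
    then obtain j where j: "\<theta> (Suc j) > 0" using pos by auto
    define l0 where "l0 = max 0 (x (Suc j))"
    have "g l0 j \<le> Z l0"
      using sum_le_suminf[OF summ[of l0], of "{j}"] gnn unfolding Z_def by simp
    moreover have "g l0 j = \<theta> (Suc j)" by (simp add: g_def l0_def)
    ultimately show ?thesis using j False by (intro exI[of _ l0]) (simp add: mm l0_def)
  qed
  show "\<exists>T\<ge>1. \<forall>t\<ge>T. mu_mass \<theta> x t \<le> 9 * t ^ 3"
  proof (intro exI[of _ "max 1 (real N)"] conjI allI impI)
    fix t assume t: "max 1 (real N) \<le> t"
    define n where "n = nat \<lceil>t\<rceil>"
    have n1: "t \<le> real n" "real n \<le> t + 1" "n \<ge> N" using t unfolding n_def by linarith+
    have "Z t \<le> Z (real n)" using Zmono n1 by auto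
    also have "\<dots> \<le> real n ^ 3" using Q2[OF n1(3)] by (simp add: Z_def g_def)
    also have "\<dots> \<le> (2 * t) ^ 3" using n1 t by (intro power_mono) auto
    finally have Zt: "Z t \<le> 8 * t ^ 3" by simp
    have "\<theta> 0 ^ 2 * t \<le> 1 * t" using t0 t by (intro mult_right_mono) auto
    also have "\<dots> \<le> t ^ 3"
    proof -
      have t1: "1 \<le> t" using t by simp
      have "1 \<le> t * t" using mult_mono[OF t1 t1] t1 by simp
      then have "t * 1 \<le> t * (t * t)" using t1 by (intro mult_left_mono) auto
      then show ?thesis by (simp add: power3_eq_cube)
    qed
    finally show "mu_mass \<theta> x t \<le> 9 * t ^ 3" using Zt by (simp add: mm)
  qed simp
qed


theorem mainTheorem11:
  fixes M :: "'a measure" and \<theta> :: "nat \<Rightarrow> real"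
    and X :: "nat \<Rightarrow> 'a \<Rightarrow> real" and E :: "nat \<Rightarrow> 'a \<Rightarrow> real"
  assumes "prob_space M"
    and "\<And>i. \<theta> i \<ge> 0"
    and "(\<lambda>i. \<theta> i ^ 2) sums 1"
    and "\<And>i. i \<ge> 1 \<Longrightarrow> \<theta> (Suc i) \<le> \<theta> i"
    and "\<theta> 0 \<noteq> 0 \<or> \<not> summable (\<lambda>i. \<theta> (Suc i))"
    and "\<And>i. i \<ge> 1 \<Longrightarrow> \<theta> i > 0 \<Longrightarrow> distributed M lborel (X i) (exponential_density (\<theta> i))"
    and "\<And>j. distributed M lborel (E j) (exponential_density 1)"
    and "prob_space.indep_vars M (\<lambda>_. borel)
           (\<lambda>k. case k of Inl i \<Rightarrow> X i | Inr j \<Rightarrow> E j)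
           (Inl ` {i. i \<ge> 1 \<and> \<theta> i > 0} \<union> Inr ` UNIV)"
  shows "AE \<omega> in M. \<exists>i0::nat. \<forall>i\<ge>i0.
           cut \<theta> (\<lambda>n. X n \<omega>) (\<lambda>n. E n \<omega>) (Suc i) - cut \<theta> (\<lambda>n. X n \<omega>) (\<lambda>n. E n \<omega>) i
             \<le> 5 * ln (cut \<theta> (\<lambda>n. X n \<omega>) (\<lambda>n. E n \<omega>) i)
                 / mu_mass \<theta> (\<lambda>n. X n \<omega>) (cut \<theta> (\<lambda>n. X n \<omega>) (\<lambda>n. E n \<omega>) i)"
proof -
  interpret prob_space M by (rule assms(1))
  have t0: "\<theta> 0 ^ 2 \<le> 1"
    using sum_le_suminf[OF sums_summable[OF assms(3)], of "{0}"] sums_unique[OF assms(3)] by simp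
  have pos: "\<theta> 0 \<noteq> 0 \<or> (\<exists>j. \<theta> (Suc j) > 0)"
  proof (rule ccontr)
    assume "\<not> ?thesis"
    then have "\<theta> 0 = 0" "\<And>j. \<theta> (Suc j) = 0" using assms(2) by (auto simp: not_less order.antisym)
    then show False using assms(5) by simp
  qed
  have A1: "AE \<omega> in M. \<forall>j. 0 \<le> E j \<omega>"
    by (subst AE_all_countable) (intro allI expo_AE_nonneg[OF assms(7)])
  have A2: "AE \<omega> in M. \<exists>N. \<forall>i\<ge>N. E i \<omega> \<le> 6/5 * ln (real i)"
    by (rule expo_tail_AE[where E=E]) (rule assms(7))
  have A3: "AE \<omega> in M. \<exists>N. \<forall>n\<ge>N. (\<Sum>j<n. E j \<omega>) \<ge> real n / 10"
    by (rule hoeff_AE[where E=E and X=X]) (rule assms(7), rule assms(8))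
  have A4: "AE \<omega> in M. (\<forall>n::nat. summable (\<lambda>i. \<theta> (Suc i) * indicator {..real n} (X (Suc i) \<omega>))) \<and>
     (\<exists>N. \<forall>n\<ge>N. (\<Sum>i. \<theta> (Suc i) * indicator {..real n} (X (Suc i) \<omega>)) \<le> real n ^ 3)"
    by (rule Z_AE[where \<theta>=\<theta> and X=X]) (rule assms(2), rule assms(3), rule assms(6))
  from A1 A2 A3 A4 show ?thesis
  proof eventually_elim
    case (elim \<omega>)
    define x where "x = (\<lambda>n. X n \<omega>)"
    define e where "e = (\<lambda>n. E n \<omega>)"
    obtain N where N: "\<And>n. n \<ge> N \<Longrightarrow> (\<Sum>i. \<theta> (Suc i) * indicator {..real n} (x (Suc i))) \<le> real n ^ 3"
      using elim unfolding x_def by blast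
    have Q1: "\<And>n::nat. summable (\<lambda>i. \<theta> (Suc i) * indicator {..real n} (x (Suc i)))"
      using elim unfolding x_def by blast
    note MP = mu_props[OF assms(2) t0 Q1 N pos]
    obtain l0 where l0: "l0 \<ge> 0" "mu_mass \<theta> x l0 > 0" using MP(3) by blast
    obtain T where T: "T \<ge> 1" "\<And>t. t \<ge> T \<Longrightarrow> mu_mass \<theta> x t \<le> 9 * t ^ 3" using MP(4) by blast
    obtain N1 where N1: "\<And>n. n \<ge> N1 \<Longrightarrow> (\<Sum>j<n. e j) \<ge> real n / 10"
      using elim unfolding e_def by blast
    obtain N2 where N2: "\<And>i. i \<ge> N2 \<Longrightarrow> e i \<le> 6/5 * ln (real i)"
      using elim unfolding e_def by blast
    have enn: "\<And>j. e j \<ge> 0" using elim unfolding e_def by blast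
    have "\<exists>i0. \<forall>i\<ge>i0. cut \<theta> x e (Suc i) - cut \<theta> x e i \<le> 5 * ln (cut \<theta> x e i) / mu_mass \<theta> x (cut \<theta> x e i)"
      by (rule det_main[OF MP(1) MP(2) l0 T enn N1 N2, where \<Lambda> = "cum_intensity \<theta> x"])
        (simp_all add: cum_intensity_def cut_def)
    then show ?case unfolding x_def e_def .
  qed
qed

end
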